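(* Let $k\ge1$ and $\mathbf m=(m_0,\dots,m_{2k})\in\mathbb Z^{2k+1}$. Then $$P_{2k-1}(x,\mathbf m)=x^{k-1}\sum_{j=0}^{k}\Big(\sum_{A\in I(2k-1,2j-1)}\prod_{i\in A}m_i\Big)x^j$$ and $$P_{2k}(x,\mathbf m)=x^{k}\sum_{j=0}^{k}\Big(\sum_{A\in I(2k,2j)}\prod_{i\in A}m_i\Big)x^j.$$
   Context: For $\mathbf m=(m_0,\dots,m_K)\in\mathbb Z^{K+1}$ the polynomials $P_\ell(x,\mathbf m),Q_\ell(x,\mathbf m)\in\mathbb Z[x]$, $0\le\ell\le K$, are defined by $P_0(x,\mathbf m)=m_0$, $Q_0(x,\mathbf m)=1$ and, for $1\le\ell\le K$, $P_\ell(x,\mathbf m)=m_\ell\,x\,P_{\ell-1}(x,\mathbf m)+Q_{\ell-1}(x,\mathbf m)$, $Q_\ell(x,\mathbf m)=x\,P_{\ell-1}(x,\mathbf m)$. For integers $h\ge0$ and $j\ge-1$, $I(h,j)$ denotes the set of subsets $\{a_0,\dots,a_j\}$ of $\{0,\dots,h\}$ (with $j+1$ elements) such that $a_0<\dots<a_j$ and $a_i\equiv i\pmod 2$ for every $i=0,\dots,j$; in particular $I(h,-1)=\{\emptyset\}$, and the empty product equals $1$. *)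

theory Defs
  imports "HOL-Computational_Algebra.Polynomial"
begin

(* PQ m l = (P_l(x,m), Q_l(x,m)); only the entries m 0, ..., m l are used *)
fun PQ :: "(nat \<Rightarrow> int) \<Rightarrow> nat \<Rightarrow> int poly \<times> int poly" where
  "PQ m 0 = ([:m 0:], 1)"
| "PQ m (Suc l) = (let (P, Q) = PQ m l in
     (smult (m (Suc l)) ([:0, 1:] * P) + Q, [:0, 1:] * P))"

definition Ppoly :: "nat \<Rightarrow> (nat \<Rightarrow> int) \<Rightarrow> int poly" where
  "Ppoly l m = fst (PQ m l)"

definition Qpoly :: "nat \<Rightarrow> (nat \<Rightarrow> int) \<Rightarrow> int poly" where
  "Qpoly l m = snd (PQ m l)"

definition Iset :: "nat \<Rightarrow> int \<Rightarrow> nat set set" where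
  "Iset h j = {A. A \<subseteq> {0..h} \<and> int (card A) = j + 1 \<and>
      (\<forall>i < card A. sorted_list_of_set A ! i mod 2 = i mod 2)}"

end

theory Submission imports Defs begin

lemma sl_snoc:
  assumes "finite B" "\<forall>b\<in>B. b < (x::nat)"
  shows "sorted_list_of_set (insert x B) = sorted_list_of_set B @ [x]"
proof -
  have "x \<notin> B" using assms by auto
  then have "sorted_list_of_set (insert x B) = insort x (sorted_list_of_set B)"
    using assms by (simp add: sorted_list_of_set_insert)
  also have "\<dots> = sorted_list_of_set B @ [x]"
    using assms by (intro sorted_insort_is_snoc) auto
  finally show ?thesis .
qed

lemma Iset_fin: "finite (Iset h j)"
  by (rule finite_subset[of _ "Pow {0..h}"]) (auto simp: Iset_def)

lemma Iset_no: "A \<in> Iset h j \<Longrightarrow> Suc h \<notin> A"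
  by (auto simp: Iset_def)

lemma Iset_Suc:
  "Iset (Suc h) j = Iset h j \<union>
     (if int (Suc h) mod 2 = j mod 2 then insert (Suc h) ` Iset h (j - 1) else {})"
  (is "?L = ?R")
proof
  show "?L \<subseteq> ?R"
  proof
    fix A assume A: "A \<in> ?L"
    have fA: "finite A" using A finite_subset[of A "{0..Suc h}"] by (auto simp: Iset_def)
    show "A \<in> ?R"
    proof (cases "Suc h \<in> A")
      case False
      then have "A \<subseteq> {0..h}" using A by (auto simp: Iset_def le_Suc_eq)
      then show ?thesis using A by (auto simp: Iset_def)
    next
      case True
      define B where "B = A - {Suc h}"
      have AB: "A = insert (Suc h) B" using True B_def by auto
      have Bsub: "B \<subseteq> {0..h}" using A by (auto simp: Iset_def B_def le_Suc_eq)
      have fB: "finite B" using fA B_def by auto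
      have nB0: "Suc h \<notin> B" by (simp add: B_def)
      have "card (insert (Suc h) B) = Suc (card B)" using fB nB0 by simp
      then have cA: "card A = Suc (card B)" using AB by simp
      have sl: "sorted_list_of_set A = sorted_list_of_set B @ [Suc h]"
        unfolding AB using fB Bsub by (intro sl_snoc) auto
      have lenB: "length (sorted_list_of_set B) = card B" by simp
      have par: "\<forall>i < card A. sorted_list_of_set A ! i mod 2 = i mod 2" using A by (simp add: Iset_def)
      have p1: "Suc h mod 2 = card B mod 2"
        using par[rule_format, of "card B"] cA sl lenB by (simp add: nth_append)
      have p2: "\<forall>i < card B. sorted_list_of_set B ! i mod 2 = i mod 2"
      proof (intro allI impI)
        fix i assume "i < card B"
        then show "sorted_list_of_set B ! i mod 2 = i mod 2"
          using par[rule_format, of i] cA sl lenB by (simp add: nth_append)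
      qed
      have cj: "int (card B) = j" using A cA by (simp add: Iset_def)
      have "int (Suc h) mod 2 = j mod 2" using p1 cj by (metis of_nat_mod of_nat_numeral)
      moreover have "B \<in> Iset h (j - 1)" using Bsub cj p2 by (simp add: Iset_def)
      ultimately show ?thesis using AB by auto
    qed
  qed
next
  show "?R \<subseteq> ?L"
  proof
    fix A assume A: "A \<in> ?R"
    show "A \<in> ?L"
    proof (cases "A \<in> Iset h j")
      case True then show ?thesis by (auto simp: Iset_def)
    next
      case False
      then obtain B where B: "B \<in> Iset h (j - 1)" and AB: "A = insert (Suc h) B"
        and pj: "int (Suc h) mod 2 = j mod 2"
        using A by (auto split: if_splits)
      have Bsub: "B \<subseteq> {0..h}" using B by (simp add: Iset_def)
      have fB: "finite B" using Bsub finite_subset by blast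
      have nB: "Suc h \<notin> B" using Bsub by auto
      have cA: "card A = Suc (card B)" using AB fB nB by simp
      have sl: "sorted_list_of_set A = sorted_list_of_set B @ [Suc h]"
        unfolding AB using fB Bsub by (intro sl_snoc) auto
      have lenB: "length (sorted_list_of_set B) = card B" by simp
      have cj: "int (card B) = j" using B by (simp add: Iset_def)
      have p2: "\<forall>i < card B. sorted_list_of_set B ! i mod 2 = i mod 2" using B by (simp add: Iset_def)
      have p1: "Suc h mod 2 = card B mod 2"
      proof -
        have "int (Suc h mod 2) = int (card B mod 2)" using pj cj by (simp add: of_nat_mod)
        then show ?thesis by linarith
      qed
      have "\<forall>i < card A. sorted_list_of_set A ! i mod 2 = i mod 2"
      proof (intro allI impI)
        fix i assume "i < card A"
        then have "i < card B \<or> i = card B" using cA by auto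
        then show "sorted_list_of_set A ! i mod 2 = i mod 2"
          using p2 p1 sl lenB by (auto simp: nth_append)
      qed
      moreover have "A \<subseteq> {0..Suc h}" using AB Bsub by auto
      ultimately show ?thesis using cA cj by (simp add: Iset_def)
    qed
  qed
qed

definition S :: "(nat \<Rightarrow> int) \<Rightarrow> nat \<Rightarrow> int \<Rightarrow> int" where
  "S m h j = (\<Sum>A \<in> Iset h j. \<Prod>i\<in>A. m i)"

lemma S_Suc: "S m (Suc h) j = S m h j +
   (if int (Suc h) mod 2 = j mod 2 then m (Suc h) * S m h (j - 1) else 0)"
proof (cases "int (Suc h) mod 2 = j mod 2")
  case True
  have disj: "Iset h j \<inter> insert (Suc h) ` Iset h (j - 1) = {}"
    using Iset_no by blast
  have inj: "inj_on (insert (Suc h)) (Iset h (j - 1))"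
  proof (rule inj_onI)
    fix x y assume x: "x \<in> Iset h (j - 1)" and y: "y \<in> Iset h (j - 1)"
      and e: "insert (Suc h) x = insert (Suc h) y"
    have "Suc h \<notin> x" "Suc h \<notin> y" using Iset_no x y by auto
    then have "x = insert (Suc h) x - {Suc h}" "y = insert (Suc h) y - {Suc h}" by auto
    then show "x = y" using e by metis
  qed
  have "S m (Suc h) j = S m h j + (\<Sum>A \<in> insert (Suc h) ` Iset h (j - 1). \<Prod>i\<in>A. m i)"
    unfolding S_def Iset_Suc using True disj by (simp add: sum.union_disjoint Iset_fin)
  also have "(\<Sum>A \<in> insert (Suc h) ` Iset h (j - 1). \<Prod>i\<in>A. m i)
     = (\<Sum>B \<in> Iset h (j - 1). \<Prod>i\<in>insert (Suc h) B. m i)"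
    using inj by (simp add: sum.reindex)
  also have "\<dots> = (\<Sum>B \<in> Iset h (j - 1). m (Suc h) * (\<Prod>i\<in>B. m i))"
  proof (rule sum.cong)
    fix B assume "B \<in> Iset h (j - 1)"
    then have "finite B" "Suc h \<notin> B" using Iset_no[of B] finite_subset[of B "{0..h}"]
      by (auto simp: Iset_def)
    then show "(\<Prod>i\<in>insert (Suc h) B. m i) = m (Suc h) * (\<Prod>i\<in>B. m i)" by simp
  qed simp
  finally show ?thesis using True by (simp add: S_def sum_distrib_left)
next
  case False
  then show ?thesis unfolding S_def Iset_Suc by simp
qed

lemma S_neg: "j < -1 \<Longrightarrow> S m h j = 0"
proof -
  assume j: "j < -1"
  have "Iset h j = {}"
  proof (rule ccontr)
    assume "Iset h j \<noteq> {}"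
    then obtain A where "A \<in> Iset h j" by blast
    then have "int (card A) = j + 1" by (simp add: Iset_def)
    with j show False by linarith
  qed
  then show ?thesis by (simp add: S_def)
qed

lemma S_big: "j > int h \<Longrightarrow> S m h j = 0"
proof -
  assume "j > int h"
  have "Iset h j = {}"
  proof (rule ccontr)
    assume "Iset h j \<noteq> {}"
    then obtain A where "A \<subseteq> {0..h}" "int (card A) = j + 1" by (auto simp: Iset_def)
    then have "card A \<le> Suc h" using card_mono[of "{0..h}" A] by auto
    with \<open>int (card A) = j + 1\<close> \<open>j > int h\<close> show False by linarith
  qed
  then show ?thesis by (simp add: S_def)
qed

lemma Iset0_sub: "A \<in> Iset 0 j \<Longrightarrow> A = {} \<and> j = -1 \<or> A = {0} \<and> j = 0"
proof -
  assume A: "A \<in> Iset 0 j"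
  have d: "A \<subseteq> {0..0} \<and> int (card A) = j + 1 \<and>
      (\<forall>i < card A. sorted_list_of_set A ! i mod 2 = i mod 2)"
    using A unfolding Iset_def by (rule CollectD)
  then have s: "A \<subseteq> {0}" and c: "int (card A) = j + 1" by auto
  from s have "A = {} \<or> A = {0}" by blast
  then show ?thesis
  proof
    assume "A = {}" then show ?thesis using c by simp
  next
    assume "A = {0}" then show ?thesis using c by simp
  qed
qed

lemma Iset0_e: "{} \<in> Iset 0 (-1)"
  unfolding Iset_def by (intro CollectI conjI) auto

lemma Iset0_1: "{0} \<in> Iset 0 0"
proof -
  have l: "sorted_list_of_set {0::nat} = [0]" by simp
  show ?thesis unfolding Iset_def by (intro CollectI conjI) (auto simp only: l card.empty card_insert_disjoint finite.emptyI, auto)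
qed

lemma S_0: "S m 0 j = (if j = -1 then 1 else if j = 0 then m 0 else 0)"
proof (cases "j = -1")
  case True
  have "Iset 0 j = {{}}"
  proof (rule set_eqI)
    fix A show "A \<in> Iset 0 j \<longleftrightarrow> A \<in> {{}}"
      using Iset0_sub[of A j] Iset0_e True by auto
  qed
  then show ?thesis using True by (simp add: S_def)
next
  case F1: False
  show ?thesis
  proof (cases "j = 0")
    case True
    have "Iset 0 j = {{0}}"
    proof (rule set_eqI)
      fix A show "A \<in> Iset 0 j \<longleftrightarrow> A \<in> {{0}}"
        using Iset0_sub[of A j] Iset0_1 True by auto
    qed
    then show ?thesis using True by (simp add: S_def)
  next
    case False
    have "Iset 0 j = {}"
    proof (rule set_eqI)
      fix A show "A \<in> Iset 0 j \<longleftrightarrow> A \<in> {}"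
        using Iset0_sub[of A j] F1 False by auto
    qed
    then show ?thesis using F1 False by (simp add: S_def)
  qed
qed

lemma coeffPQ: "coeff (fst (PQ m l)) n = S m l (2 * int n - int l) \<and>
                coeff (snd (PQ m l)) n = S m l (2 * int n - int l - 1)"
proof (induction l arbitrary: n)
  case 0
  then show ?case by (cases n) (auto simp: S_0)
next
  case (Suc l)
  obtain P Q where PQ: "PQ m l = (P, Q)" by fastforce
  have IH: "coeff P n = S m l (2 * int n - int l)" "coeff Q n = S m l (2 * int n - int l - 1)" for n
    using Suc.IH[of n] PQ by auto
  have cxP: "coeff ([:0, 1:] * P) n = (if n = 0 then 0 else coeff P (n - 1))" for n
    by (cases n) (simp_all add: coeff_pCons)
  show ?case
  proof (cases n)
    case 0
    then show ?thesis using PQ IH cxP by (auto simp: S_Suc S_neg algebra_simps)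
  next
    case (Suc n')
    have p1: "int (Suc l) mod 2 = (2 * int n - int (Suc l)) mod 2" by presburger
    have p2: "int (Suc l) mod 2 \<noteq> (2 * int n - int (Suc l) - 1) mod 2" by presburger
    have e1: "2 * int n - int (Suc l) - 1 = 2 * int n' - int l" using Suc by simp
    have e2: "2 * int n - int l - 1 = 2 * int n - int (Suc l)" by simp
    have e3: "2 * int n - int (Suc l) - 1 - 1 = 2 * int n' - int l - 1" using Suc by simp
    have c1: "coeff (fst (PQ m (Suc l))) n = m (Suc l) * coeff P n' + coeff Q n"
      using PQ cxP Suc by simp
    have c2: "coeff (snd (PQ m (Suc l))) n = coeff P n'"
      using PQ cxP Suc by simp
    have "S m (Suc l) (2 * int n - int (Suc l)) = S m l (2 * int n - int (Suc l)) + m (Suc l) * S m l (2 * int n - int (Suc l) - 1)"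
      using p1 by (simp add: S_Suc)
    also have "\<dots> = coeff (fst (PQ m (Suc l))) n" unfolding c1 IH e1 e2 by simp
    finally have A1: "coeff (fst (PQ m (Suc l))) n = S m (Suc l) (2 * int n - int (Suc l))" by simp
    have "S m (Suc l) (2 * int n - int (Suc l) - 1) = S m l (2 * int n - int (Suc l) - 1)"
      using p2 by (simp add: S_Suc)
    also have "\<dots> = coeff (snd (PQ m (Suc l))) n" unfolding c2 IH e1 by simp
    finally show ?thesis using A1 by simp
  qed
qed

lemma coeff_xpow: "coeff ([:0, 1:] ^ a * p) n = (if n < a then 0 else coeff p (n - a))"
proof (induction a arbitrary: n)
  case 0 then show ?case by simp
next
  case (Suc a)
  show ?case
  proof (cases n)
    case 0 then show ?thesis by (simp add: mult.assoc)
  next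
    case (Suc n') then show ?thesis using Suc.IH[of n'] by (simp add: mult.assoc coeff_pCons)
  qed
qed

lemma coeff_msum: "coeff (\<Sum>j = 0..k. monom (c j) j) n = (if n \<le> k then c n else (0::int))"
  by (simp add: coeff_sum coeff_monom)

theorem lemma8:
  fixes k :: nat and m :: "nat \<Rightarrow> int"
  assumes "k \<ge> 1"
  shows "(Ppoly (2*k - 1) m =
           [:0, 1:] ^ (k - 1) *
           (\<Sum>j = 0..k. monom (\<Sum>A \<in> Iset (2*k - 1) (2 * int j - 1). \<Prod>i\<in>A. m i) j)) \<and>
         (Ppoly (2*k) m =
           [:0, 1:] ^ k *
           (\<Sum>j = 0..k. monom (\<Sum>A \<in> Iset (2*k) (2 * int j). \<Prod>i\<in>A. m i) j))"
proof
  show "Ppoly (2*k - 1) m =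
           [:0, 1:] ^ (k - 1) *
           (\<Sum>j = 0..k. monom (\<Sum>A \<in> Iset (2*k - 1) (2 * int j - 1). \<Prod>i\<in>A. m i) j)"
  proof (rule poly_eqI)
    fix n
    have L: "coeff (Ppoly (2*k - 1) m) n = S m (2*k-1) (2 * int n - int (2*k-1))"
      using coeffPQ by (simp add: Ppoly_def)
    have R: "coeff ([:0, 1:] ^ (k - 1) *
           (\<Sum>j = 0..k. monom (\<Sum>A \<in> Iset (2*k - 1) (2 * int j - 1). \<Prod>i\<in>A. m i) j)) n
       = (if n < k - 1 then 0 else if n - (k - 1) \<le> k then S m (2*k-1) (2 * int (n - (k - 1)) - 1) else 0)"
      unfolding coeff_xpow coeff_msum S_def by simp
    show "coeff (Ppoly (2*k - 1) m) n = coeff ([:0, 1:] ^ (k - 1) *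
           (\<Sum>j = 0..k. monom (\<Sum>A \<in> Iset (2*k - 1) (2 * int j - 1). \<Prod>i\<in>A. m i) j)) n"
      unfolding L R
    proof (cases "n < k - 1")
      case True
      then show "S m (2*k-1) (2 * int n - int (2*k-1)) = (if n < k - 1 then 0 else if n - (k - 1) \<le> k then S m (2*k-1) (2 * int (n - (k - 1)) - 1) else 0)"
        using assms by (simp add: S_neg)
    next
      case False
      show "S m (2*k-1) (2 * int n - int (2*k-1)) = (if n < k - 1 then 0 else if n - (k - 1) \<le> k then S m (2*k-1) (2 * int (n - (k - 1)) - 1) else 0)"
      proof (cases "n - (k - 1) \<le> k")
        case True
        have "2 * int n - int (2*k-1) = 2 * int (n - (k - 1)) - 1" using False assms by simp
        then have "S m (2*k-1) (2 * int n - int (2*k-1)) = S m (2*k-1) (2 * int (n - (k - 1)) - 1)" by (rule arg_cong)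
        then show ?thesis by (simp only: False True if_False if_True)
      next
        case F2: False
        have "2 * int n - int (2*k-1) > int (2*k-1)" using False F2 assms by simp
        then show ?thesis using False F2 by (simp add: S_big)
      qed
    qed
  qed
next
  show "Ppoly (2*k) m =
           [:0, 1:] ^ k *
           (\<Sum>j = 0..k. monom (\<Sum>A \<in> Iset (2*k) (2 * int j). \<Prod>i\<in>A. m i) j)"
  proof (rule poly_eqI)
    fix n
    have L: "coeff (Ppoly (2*k) m) n = S m (2*k) (2 * int n - int (2*k))"
      using coeffPQ by (simp add: Ppoly_def)
    have R: "coeff ([:0, 1:] ^ k *
           (\<Sum>j = 0..k. monom (\<Sum>A \<in> Iset (2*k) (2 * int j). \<Prod>i\<in>A. m i) j)) n
       = (if n < k then 0 else if n - k \<le> k then S m (2*k) (2 * int (n - k)) else 0)"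
      unfolding coeff_xpow coeff_msum S_def by simp
    show "coeff (Ppoly (2*k) m) n = coeff ([:0, 1:] ^ k *
           (\<Sum>j = 0..k. monom (\<Sum>A \<in> Iset (2*k) (2 * int j). \<Prod>i\<in>A. m i) j)) n"
      unfolding L R
    proof (cases "n < k")
      case True
      then show "S m (2*k) (2 * int n - int (2*k)) = (if n < k then 0 else if n - k \<le> k then S m (2*k) (2 * int (n - k)) else 0)"
        by (simp add: S_neg)
    next
      case False
      show "S m (2*k) (2 * int n - int (2*k)) = (if n < k then 0 else if n - k \<le> k then S m (2*k) (2 * int (n - k)) else 0)"
      proof (cases "n - k \<le> k")
        case True
        have "2 * int n - int (2*k) = 2 * int (n - k)" using False by simp
        then have "S m (2*k) (2 * int n - int (2*k)) = S m (2*k) (2 * int (n - k))" by (rule arg_cong)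
        then show ?thesis by (simp only: False True if_False if_True)
      next
        case F2: False
        have "2 * int n - int (2*k) > int (2*k)" using False F2 by simp
        then show ?thesis using False F2 by (simp add: S_big)
      qed
    qed
  qed
qed

end
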